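(* Let $G=\langle a,b\mid a^n=1,\ b^t=a^k,\ b^{-1}ab=a^r\rangle$ with natural numbers $n,t,k,r$ satisfying $r^t\equiv1\pmod n$ and $k(r-1)\equiv0\pmod n$. Let $(v,i,c)\in\mathfrak{N}$ and $(v,\alpha_1,\beta_1),(v,\alpha_2,\beta_2)\in X_{v,i,c}$. Then $H_{v,\alpha_1,\beta_1o_v}$ and $H_{v,\alpha_2,\beta_2o_v}$ are conjugate in $G$ if and only if $\beta_1=\beta_2$ and $\alpha_1\equiv\alpha_2r^j\pmod v$ for some integer $j$.
   Context: For a divisor $v$ of $n$: $o_v=\operatorname{ord}_v(r)$, $\mathcal{B}_{o_v}=\{(w,i,c)\in\mathbb{Z}^3: w>0,\ w\mid n,\ w\mid r^{o_v}-1,\ o_vc>0,\ o_vc\mid t,\ w\mid k+i\tfrac{t}{o_vc}\}$. For integers $v,i,c$, $H_{v,i,c}=\langle a^v,a^ib^c\rangle$. $\mathfrak{N}=\{(v,i,c)\in\mathbb{Z}^3: v>0,\ v\mid n,\ c>0,\ c\mid t,\ 0\le i\le v-1,\ v\mid k+i\tfrac tc,\ o_v\mid c,\ v\mid i(r-1)\}$. For $(v,i,c)\in\mathfrak{N}$, $X_{v,i,c}$ is the set of $(v,\alpha,\beta)\in\mathcal{B}_{o_v}$ with $\beta o_v\mid c$, $\alpha\frac{c}{\beta o_v}\equiv i\pmod v$, $\beta=\frac{c\gcd(\alpha(r-1),v)}{v\,o_v}$ and $\gcd(v,\alpha,\beta)=1$. *)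

theory Defs
  imports "HOL-Algebra.Algebra" "HOL-Number_Theory.Number_Theory"
begin

text \<open>Under these conditions the presented
  group has order exactly n*t, so G is characterised up to isomorphism as a group generated
  by a, b satisfying the defining relations and having order n*t.\<close>
definition metacyclic_pres ::
  "('g, 'm) monoid_scheme \<Rightarrow> 'g \<Rightarrow> 'g \<Rightarrow> nat \<Rightarrow> nat \<Rightarrow> nat \<Rightarrow> nat \<Rightarrow> bool" where
  "metacyclic_pres G a b n t k r \<longleftrightarrow>
     group G \<and> a \<in> carrier G \<and> b \<in> carrier G \<and>
     generate G {a, b} = carrier G \<and>
     a [^]\<^bsub>G\<^esub> n = \<one>\<^bsub>G\<^esub> \<and>
     b [^]\<^bsub>G\<^esub> t = a [^]\<^bsub>G\<^esub> k \<and>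
     inv\<^bsub>G\<^esub> b \<otimes>\<^bsub>G\<^esub> a \<otimes>\<^bsub>G\<^esub> b = a [^]\<^bsub>G\<^esub> r \<and>
     finite (carrier G) \<and> card (carrier G) = n * t"

definition o_ord :: "nat \<Rightarrow> int \<Rightarrow> int" where
  "o_ord r v = int (ord (nat v) r)"

definition B_set :: "nat \<Rightarrow> nat \<Rightarrow> nat \<Rightarrow> nat \<Rightarrow> int \<Rightarrow> (int \<times> int \<times> int) set" where
  "B_set n t k r ov = {(w, i, c). w > 0 \<and> w dvd int n \<and> w dvd int r ^ nat ov - 1 \<and>
       ov * c > 0 \<and> ov * c dvd int t \<and> w dvd int k + i * (int t div (ov * c))}"

definition H_sub :: "('g, 'm) monoid_scheme \<Rightarrow> 'g \<Rightarrow> 'g \<Rightarrow> int \<Rightarrow> int \<Rightarrow> int \<Rightarrow> 'g set" where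
  "H_sub G a b v i c =
     generate G {a [^]\<^bsub>G\<^esub> v, a [^]\<^bsub>G\<^esub> i \<otimes>\<^bsub>G\<^esub> b [^]\<^bsub>G\<^esub> c}"

definition frakN :: "nat \<Rightarrow> nat \<Rightarrow> nat \<Rightarrow> nat \<Rightarrow> (int \<times> int \<times> int) set" where
  "frakN n t k r = {(v, i, c). v > 0 \<and> v dvd int n \<and> c > 0 \<and> c dvd int t \<and>
       0 \<le> i \<and> i \<le> v - 1 \<and> v dvd int k + i * (int t div c) \<and>
       o_ord r v dvd c \<and> v dvd i * (int r - 1)}"

definition X_set :: "nat \<Rightarrow> nat \<Rightarrow> nat \<Rightarrow> nat \<Rightarrow> int \<Rightarrow> int \<Rightarrow> int \<Rightarrow> (int \<times> int \<times> int) set" where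
  "X_set n t k r v i c = {(v', \<alpha>, \<beta>). (v', \<alpha>, \<beta>) \<in> B_set n t k r (o_ord r v) \<and> v' = v \<and>
       \<beta> * o_ord r v dvd c \<and>
       [\<alpha> * (c div (\<beta> * o_ord r v)) = i] (mod v) \<and>
       \<beta> * (v * o_ord r v) = c * gcd (\<alpha> * (int r - 1)) v \<and>
       gcd v (gcd \<alpha> \<beta>) = 1}"

definition conjugate_in :: "('g, 'm) monoid_scheme \<Rightarrow> 'g set \<Rightarrow> 'g set \<Rightarrow> bool" where
  "conjugate_in G H1 H2 \<longleftrightarrow>
     (\<exists>g \<in> carrier G. H2 = (\<lambda>h. g \<otimes>\<^bsub>G\<^esub> h \<otimes>\<^bsub>G\<^esub> inv\<^bsub>G\<^esub> g) ` H1)"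

end

theory Submission
  imports Defs
begin


definition cj :: "('g, 'm) monoid_scheme \<Rightarrow> 'g \<Rightarrow> 'g \<Rightarrow> 'g" where
  "cj G g h = g \<otimes>\<^bsub>G\<^esub> h \<otimes>\<^bsub>G\<^esub> inv\<^bsub>G\<^esub> g"

lemma pow_dvd_mult:
  fixes v :: int
  assumes "v dvd int r ^ c - 1" "c dvd e"
  shows "v dvd int r ^ e - 1"
proof -
  obtain m where e: "e = c * m" using assms(2) by blast
  have "[int r ^ c = 1] (mod v)" using assms(1) by (simp add: cong_iff_dvd_diff)
  then have "[(int r ^ c) ^ m = 1 ^ m] (mod v)" by (rule cong_pow)
  then show ?thesis by (simp add: e power_mult cong_iff_dvd_diff)
qed

context group begin

lemma inv_cancel_left' [simp]: "g \<in> carrier G \<Longrightarrow> z \<in> carrier G \<Longrightarrow> inv g \<otimes> (g \<otimes> z) = z"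
  by (simp add: m_assoc[symmetric])

lemma cj_hom: "g \<in> carrier G \<Longrightarrow> group_hom G G (cj G g)"
  unfolding group_hom_def group_hom_axioms_def hom_def cj_def
  by (auto simp: is_group m_assoc)

lemma cj_closed: "g \<in> carrier G \<Longrightarrow> x \<in> carrier G \<Longrightarrow> cj G g x \<in> carrier G"
  by (simp add: cj_def)

lemma cj_pow: "g \<in> carrier G \<Longrightarrow> x \<in> carrier G \<Longrightarrow> cj G g (x [^] (m::int)) = (cj G g x) [^] m"
  using group_hom.hom_int_pow[OF cj_hom] by blast

lemma cj_mult: "g \<in> carrier G \<Longrightarrow> x \<in> carrier G \<Longrightarrow> y \<in> carrier G \<Longrightarrow> cj G g (x \<otimes> y) = cj G g x \<otimes> cj G g y"
  unfolding cj_def by (simp add: m_assoc)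

lemma cj_comp: "g \<in> carrier G \<Longrightarrow> h \<in> carrier G \<Longrightarrow> x \<in> carrier G \<Longrightarrow> cj G (g \<otimes> h) x = cj G g (cj G h x)"
  unfolding cj_def by (simp add: m_assoc inv_mult_group)

lemma cj_inv_cancel: "g \<in> carrier G \<Longrightarrow> x \<in> carrier G \<Longrightarrow> cj G (inv g) (cj G g x) = x"
  unfolding cj_def by (simp add: m_assoc)

lemma cj_img_generate: "g \<in> carrier G \<Longrightarrow> K \<subseteq> carrier G \<Longrightarrow> cj G g ` generate G K = generate G (cj G g ` K)"
  using group_hom.generate_img[OF cj_hom] by metis

lemma cj_commute: "g \<in> carrier G \<Longrightarrow> x \<in> carrier G \<Longrightarrow> g \<otimes> x = x \<otimes> g \<Longrightarrow> cj G g x = x"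
  unfolding cj_def by (metis inv_solve_right m_closed)

lemma int_pow_commute: "x \<in> carrier G \<Longrightarrow> x [^] (i::int) \<otimes> x [^] (j::int) = x [^] j \<otimes> x [^] i"
  by (simp add: int_pow_mult[symmetric] add.commute)

end



locale mcg = group G for G (structure) +
  fixes a b and n t k r :: nat
  assumes a: "a \<in> carrier G" and b: "b \<in> carrier G"
    and gen: "generate G {a, b} = carrier G"
    and an: "a [^] (int n) = \<one>"
    and bt: "b [^] (int t) = a [^] (int k)"
    and rel: "inv b \<otimes> a \<otimes> b = a [^] (int r)"
    and fin: "finite (carrier G)" and crd: "card (carrier G) = n * t"
    and npos: "n > 0" and tpos: "t > 0"
begin

lemma apow_mod: "int n dvd x - y \<Longrightarrow> a [^] (x::int) = a [^] y"
proof -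
  assume "int n dvd x - y" then obtain q where "x = y + int n * q"
    by (metis dvd_def eq_diff_eq add.commute)
  then have "a [^] x = a [^] y \<otimes> (a [^] int n) [^] q" by (simp add: a int_pow_mult int_pow_pow)
  then show ?thesis by (simp add: an a)
qed

lemma amul [simp]: "a [^] (x::int) \<otimes> a [^] (y::int) = a [^] (x+y)" by (simp add: a int_pow_mult)
lemma amul' [simp]: "z \<in> carrier G \<Longrightarrow> a [^] (x::int) \<otimes> (a [^] (y::int) \<otimes> z) = a [^] (x+y) \<otimes> z"
  by (simp add: a m_assoc[symmetric])
lemma bmul [simp]: "b [^] (x::int) \<otimes> b [^] (y::int) = b [^] (x+y)" by (simp add: b int_pow_mult)
lemma bmul' [simp]: "z \<in> carrier G \<Longrightarrow> b [^] (x::int) \<otimes> (b [^] (y::int) \<otimes> z) = b [^] (x+y) \<otimes> z"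
  by (simp add: b m_assoc[symmetric])
lemma ainv [simp]: "inv (a [^] (x::int)) = a [^] (-x)" by (simp add: a int_pow_neg)
lemma binv [simp]: "inv (b [^] (x::int)) = b [^] (-x)" by (simp add: b int_pow_neg)
lemma acl [simp]: "a [^] (x::int) \<in> carrier G" by (simp add: a)
lemma bcl [simp]: "b [^] (x::int) \<in> carrier G" by (simp add: b)

lemma bt_q: "b [^] (int t * q) = a [^] (int k * q)"
  by (metis a b bt int_pow_pow)

lemma conj_a_nat: "cj G (inv (b [^] (m::nat))) a = a [^] (int r ^ m)"
proof (induction m)
  case 0 show ?case by (simp add: cj_def a)
next
  case (Suc m)
  have r: "cj G (inv b) a = a [^] int r" using rel by (simp add: cj_def b)
  have "inv (b [^] Suc m) = inv b \<otimes> inv (b [^] m)" by (simp add: b inv_mult_group)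
  then have "cj G (inv (b [^] Suc m)) a = cj G (inv b) (cj G (inv (b [^] m)) a)" by (simp add: cj_comp b a)
  also have "\<dots> = cj G (inv b) (a [^] (int r ^ m))" using Suc by simp
  also have "\<dots> = (cj G (inv b) a) [^] (int r ^ m)" by (simp add: cj_pow a b)
  also have "\<dots> = (a [^] int r) [^] (int r ^ m)" using r by simp
  also have "\<dots> = a [^] (int r ^ Suc m)" by (simp add: a int_pow_pow mult.commute)
  finally show ?case .
qed

definition sf :: "int \<Rightarrow> int" where
  "sf y = (if y \<ge> 0 then int r ^ ((t - 1) * nat y) else int r ^ nat (- y))"

lemma conj_b_a: "cj G (b [^] (y::int)) a = a [^] sf y"
proof (cases "y \<ge> 0")
  case False
  then have "b [^] nat (-y) = b [^] (-y)" by (simp add: pow_nat)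
  then have "b [^] y = inv (b [^] nat (-y))" by simp
  then have "cj G (b [^] y) a = a [^] (int r ^ nat (-y))" using conj_a_nat by simp
  then show ?thesis using False by (simp add: sf_def)
next
  case True
  define m where "m = nat y"
  have y: "b [^] y = b [^] m" using True by (simp add: m_def pow_nat)
  have eq1: "b [^] ((t-1)*m) \<otimes> b [^] m = b [^] (t*m)"
  proof -
    have "(t-1)*m + m = t*m" using tpos by (cases t) auto
    then show ?thesis by (simp add: b nat_pow_mult)
  qed
  have bm: "b [^] m = inv (b [^] ((t-1)*m)) \<otimes> b [^] (t*m)"
    by (simp add: eq1[symmetric] b)
  have "b [^] (t*m) = a [^] (k*m)"
    using bt_q[of "int m"] by (simp add: int_pow_int[symmetric])
  then have c: "cj G (b [^] (t*m)) a = a"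
    using cj_commute[OF nat_pow_closed[OF a] a group_commutes_pow[OF refl a a]] by simp
  have "cj G (b [^] y) a = cj G (inv (b [^] ((t-1)*m)) \<otimes> b [^] (t*m)) a"
    unfolding y by (subst bm) (rule refl)
  also have "\<dots> = cj G (inv (b [^] ((t-1)*m))) (cj G (b [^] (t*m)) a)"
    by (rule cj_comp) (simp_all add: a b)
  also have "\<dots> = a [^] (int r ^ ((t-1)*m))" using c conj_a_nat by simp
  finally show ?thesis using True by (simp add: sf_def m_def)
qed

lemma conj_b_apow: "cj G (b [^] (y::int)) (a [^] (x::int)) = a [^] (x * sf y)"
  by (simp add: cj_pow conj_b_a a b int_pow_pow mult.commute)

lemma ba_comm [simp]: "b [^] (y::int) \<otimes> a [^] (x::int) = a [^] (x * sf y) \<otimes> b [^] y"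
proof -
  have "b [^] y \<otimes> a [^] x \<otimes> inv (b [^] y) = a [^] (x * sf y)"
    using conj_b_apow by (simp add: cj_def)
  then show ?thesis by (metis acl bcl inv_solve_right m_closed binv)
qed

lemma ba_comm' [simp]: "z \<in> carrier G \<Longrightarrow> b [^] (y::int) \<otimes> (a [^] (x::int) \<otimes> z) = a [^] (x * sf y) \<otimes> (b [^] y \<otimes> z)"
proof -
  assume z: "z \<in> carrier G"
  have "b [^] y \<otimes> (a [^] x \<otimes> z) = (b [^] y \<otimes> a [^] x) \<otimes> z" by (rule m_assoc[symmetric]) (simp_all add: z)
  also have "\<dots> = (a [^] (x * sf y) \<otimes> b [^] y) \<otimes> z" by (simp only: ba_comm)
  also have "\<dots> = a [^] (x * sf y) \<otimes> (b [^] y \<otimes> z)" by (rule m_assoc) (simp_all add: z)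
  finally show ?thesis .
qed

lemma sf_dvd:
  fixes c v y :: int
  assumes "c > 0" "v dvd int r ^ nat c - 1" "c dvd y"
  shows "v dvd sf y - 1"
proof (cases "y \<ge> 0")
  case True
  have "nat c dvd nat y" using assms True by (simp add: nat_dvd_iff)
  then have "nat c dvd (t-1) * nat y" by simp
  then show ?thesis using pow_dvd_mult[OF assms(2)] True by (simp add: sf_def)
next
  case False
  have "nat c dvd nat (-y)" using assms False by (simp add: nat_dvd_iff)
  then show ?thesis using pow_dvd_mult[OF assms(2)] False by (simp add: sf_def)
qed

lemma sf_pow: "\<exists>e. sf y = int r ^ e" by (simp add: sf_def) blast


lemma cj_b_gen: "cj G (b [^] (y::int)) (a [^] (x::int) \<otimes> b [^] (c::int)) = a [^] (x * sf y) \<otimes> b [^] c"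
  by (simp add: cj_def m_assoc)

definition Kset :: "int \<Rightarrow> int \<Rightarrow> int \<Rightarrow> _ set" where
  "Kset v \<alpha> c = {z. \<exists>x p. z = a [^] (x::int) \<otimes> b [^] (c*p) \<and> v dvd x - \<alpha> * p}"

lemma K_sub:
  assumes c: "c > 0" and vr: "v dvd int r ^ nat c - 1"
  shows "subgroup (Kset v \<alpha> c) G"
proof (rule subgroupI)
  show "Kset v \<alpha> c \<subseteq> carrier G" by (auto simp: Kset_def)
  have "a [^] (0::int) \<otimes> b [^] (c*0) \<in> Kset v \<alpha> c"
    unfolding Kset_def by (rule CollectI, rule exI[of _ 0], rule exI[of _ 0]) simp
  then show "Kset v \<alpha> c \<noteq> {}" by blast
next
  fix z assume "z \<in> Kset v \<alpha> c"
  then obtain x p where z: "z = a [^] x \<otimes> b [^] (c*p)" and d: "v dvd x - \<alpha> * p"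
    by (auto simp: Kset_def)
  have e: "inv z = a [^] (-x * sf (-(c*p))) \<otimes> b [^] (c * (-p))"
    by (simp add: z inv_mult_group)
  have s: "v dvd sf (-(c*p)) - 1" by (rule sf_dvd[OF c vr]) simp
  have "(-x * sf (-(c*p))) - \<alpha> * (-p) = -(x - \<alpha>*p) - x*(sf (-(c*p)) - 1)"
    by (simp add: algebra_simps)
  moreover have "v dvd -(x - \<alpha>*p) - x*(sf (-(c*p)) - 1)"
    using d s by (metis dvd_diff dvd_minus_iff dvd_mult)
  ultimately have "v dvd (-x * sf (-(c*p))) - \<alpha> * (-p)" by metis
  then show "inv z \<in> Kset v \<alpha> c" unfolding Kset_def using e by blast
next
  fix z1 z2 assume "z1 \<in> Kset v \<alpha> c" "z2 \<in> Kset v \<alpha> c"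
  then obtain x1 p1 x2 p2 where z1: "z1 = a [^] x1 \<otimes> b [^] (c*p1)" and d1: "v dvd x1 - \<alpha> * p1"
     and z2: "z2 = a [^] x2 \<otimes> b [^] (c*p2)" and d2: "v dvd x2 - \<alpha> * p2"
    by (auto simp: Kset_def)
  have e: "z1 \<otimes> z2 = a [^] (x1 + x2 * sf (c*p1)) \<otimes> b [^] (c * (p1 + p2))"
    by (simp add: z1 z2 m_assoc distrib_left)
  have s: "v dvd sf (c*p1) - 1" by (rule sf_dvd[OF c vr]) simp
  have "x1 + x2 * sf (c*p1) - \<alpha> * (p1 + p2) = (x1 - \<alpha>*p1) + (x2 - \<alpha>*p2) + x2 * (sf (c*p1) - 1)"
    by (simp add: algebra_simps)
  moreover have "v dvd (x1 - \<alpha>*p1) + (x2 - \<alpha>*p2) + x2 * (sf (c*p1) - 1)"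
    using d1 d2 s by simp
  ultimately have "v dvd x1 + x2 * sf (c*p1) - \<alpha> * (p1 + p2)" by metis
  then show "z1 \<otimes> z2 \<in> Kset v \<alpha> c" unfolding Kset_def using e by blast
qed

lemma all_form:
  assumes "z \<in> carrier G" shows "\<exists>x y. z = a [^] (x::int) \<otimes> b [^] (y::int)"
proof -
  have sub: "subgroup (Kset 1 0 1) G" by (rule K_sub) simp_all
  have "a \<in> Kset 1 0 1"
    unfolding Kset_def by (rule CollectI, rule exI[of _ 1], rule exI[of _ 0]) (simp add: a)
  moreover have "b \<in> Kset 1 0 1"
    unfolding Kset_def by (rule CollectI, rule exI[of _ 0], rule exI[of _ 1]) (simp add: b)
  ultimately have "generate G {a, b} \<subseteq> Kset 1 0 1"
    by (intro generate_subgroup_incl[OF _ sub]) auto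
  then show ?thesis using assms gen by (auto simp: Kset_def)
qed

lemma bred: "b [^] (w::int) = a [^] (int k * (w div int t)) \<otimes> b [^] (w mod int t)"
proof -
  have "b [^] w = b [^] (int t * (w div int t) + w mod int t)" by (metis mult_div_mod_eq)
  also have "\<dots> = b [^] (int t * (w div int t)) \<otimes> b [^] (w mod int t)" by (simp add: b int_pow_mult)
  finally show ?thesis by (simp add: bt_q)
qed

lemma mod_dvd_aux: "int n dvd (w mod int n) - w"
  by (simp add: mod_eq_dvd_iff[symmetric])

lemma red_form:
  assumes "z \<in> carrier G"
  shows "\<exists>x y. z = a [^] x \<otimes> b [^] y \<and> 0 \<le> x \<and> x < int n \<and> 0 \<le> y \<and> y < int t"
proof -
  obtain x y where z: "z = a [^] (x::int) \<otimes> b [^] (y::int)" using all_form[OF assms] by blast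
  define w where "w = x + int k * (y div int t)"
  have "z = a [^] w \<otimes> b [^] (y mod int t)"
    unfolding z w_def by (subst bred) simp
  also have "a [^] w = a [^] (w mod int n)" by (rule apow_mod[symmetric]) (rule mod_dvd_aux)
  finally have "z = a [^] (w mod int n) \<otimes> b [^] (y mod int t)" .
  moreover have "0 \<le> w mod int n" "w mod int n < int n" using npos by simp_all
  moreover have "0 \<le> y mod int t" "y mod int t < int t" using tpos by simp_all
  ultimately show ?thesis by blast
qed

lemma inj_form: "inj_on (\<lambda>(x,y). a [^] (x::int) \<otimes> b [^] (y::int)) ({0..<int n} \<times> {0..<int t})"
proof -
  let ?f = "\<lambda>(x,y). a [^] (x::int) \<otimes> b [^] (y::int)"
  let ?A = "{0..<int n} \<times> {0..<int t}"
  have "?f ` ?A = carrier G"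
  proof
    show "?f ` ?A \<subseteq> carrier G" by auto
    show "carrier G \<subseteq> ?f ` ?A"
    proof
      fix z assume "z \<in> carrier G"
      then obtain x y where "z = a [^] x \<otimes> b [^] y" "0 \<le> x" "x < int n" "0 \<le> y" "y < int t"
        using red_form by blast
      then show "z \<in> ?f ` ?A" by (auto intro!: image_eqI[of _ _ "(x,y)"])
    qed
  qed
  moreover have "card ?A = n * t" by (simp add: card_cartesian_product)
  ultimately have "card (?f ` ?A) = card ?A" using crd by simp
  then show ?thesis by (simp add: inj_on_iff_eq_card)
qed

lemma uniq:
  assumes eq: "a [^] (X1::int) \<otimes> b [^] (Y1::int) = a [^] (x::int) \<otimes> b [^] (y::int)"
  shows "\<exists>q. Y1 - y = int t * q \<and> int n dvd X1 - x + int k * q"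
proof -
  have "a [^] (-X1) \<otimes> (a [^] X1 \<otimes> b [^] Y1) \<otimes> b [^] (-y) = a [^] (-X1) \<otimes> (a [^] x \<otimes> b [^] y) \<otimes> b [^] (-y)"
    by (simp only: eq)
  then have e1: "b [^] (Y1 - y) = a [^] (x - X1)" by (simp add: m_assoc)
  define q where "q = (Y1 - y) div int t"
  define d where "d = (Y1 - y) mod int t"
  have "a [^] (int k * q) \<otimes> b [^] d = a [^] (x - X1) \<otimes> b [^] (0::int)"
    using e1 bred[of "Y1 - y"] by (simp add: q_def d_def)
  moreover have "a [^] (int k * q) = a [^] ((int k * q) mod int n)" by (rule apow_mod[symmetric]) (rule mod_dvd_aux)
  moreover have "a [^] (x - X1) = a [^] ((x - X1) mod int n)" by (rule apow_mod[symmetric]) (rule mod_dvd_aux)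
  ultimately have "(\<lambda>(x,y). a [^] (x::int) \<otimes> b [^] (y::int)) ((int k * q) mod int n, d)
      = (\<lambda>(x,y). a [^] (x::int) \<otimes> b [^] (y::int)) ((x - X1) mod int n, 0)" by simp
  moreover have "((int k * q) mod int n, d) \<in> {0..<int n} \<times> {0..<int t}"
    using npos tpos by (simp add: d_def)
  moreover have "((x - X1) mod int n, 0) \<in> {0..<int n} \<times> {0..<int t}"
    using npos tpos by simp
  ultimately have "(int k * q) mod int n = (x - X1) mod int n \<and> d = 0"
    using inj_form unfolding inj_on_def by blast
  then have "Y1 - y = int t * q" "int n dvd int k * q - (x - X1)"
    by (auto simp: q_def d_def mod_eq_dvd_iff mult_div_mod_eq)
  then show ?thesis by (metis diff_diff_eq2 diff_add_eq add.commute)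
qed


lemma mem:
  assumes c: "c > 0" and vr: "v dvd int r ^ nat c - 1" and ct: "c dvd int t" and vn: "v dvd int n"
    and vk: "v dvd int k + \<alpha> * (int t div c)"
    and m: "a [^] X1 \<otimes> b [^] Y1 \<in> generate G {a [^] v, a [^] \<alpha> \<otimes> b [^] c}"
  shows "c dvd Y1 \<and> v dvd X1 - \<alpha> * (Y1 div c)"
proof -
  have "generate G {a [^] v, a [^] \<alpha> \<otimes> b [^] c} \<subseteq> Kset v \<alpha> c"
  proof (rule generate_subgroup_incl[OF _ K_sub[OF c vr]])
    have "a [^] v \<in> Kset v \<alpha> c"
      unfolding Kset_def by (rule CollectI, rule exI[of _ v], rule exI[of _ 0]) simp
    moreover have "a [^] \<alpha> \<otimes> b [^] c \<in> Kset v \<alpha> c"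
      unfolding Kset_def by (rule CollectI, rule exI[of _ \<alpha>], rule exI[of _ 1]) simp
    ultimately show "{a [^] v, a [^] \<alpha> \<otimes> b [^] c} \<subseteq> Kset v \<alpha> c" by blast
  qed
  with m obtain x p where e: "a [^] X1 \<otimes> b [^] Y1 = a [^] x \<otimes> b [^] (c*p)" and d: "v dvd x - \<alpha> * p"
    by (auto simp: Kset_def)
  obtain q where q1: "Y1 - c*p = int t * q" and q2: "int n dvd X1 - x + int k * q"
    using uniq[OF e] by blast
  obtain s where ts: "int t = c * s" using ct by blast
  have sdef: "int t div c = s" using ts c by simp
  have Y: "Y1 = c * (p + s*q)" using q1 ts by (simp add: algebra_simps)
  have Yc: "Y1 div c = p + s*q" using Y c by simp
  have eq: "X1 - \<alpha> * (p + s*q) = (X1 - x + int k * q) + (x - \<alpha>*p) - q * (int k + \<alpha> * s)"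
    by (simp add: algebra_simps)
  have "v dvd (X1 - x + int k * q) + (x - \<alpha>*p) - q * (int k + \<alpha> * s)"
    using dvd_trans[OF vn q2] d vk sdef by (metis dvd_add dvd_diff dvd_mult)
  then have "v dvd X1 - \<alpha> * (p + s*q)" using eq by metis
  then show ?thesis using Y Yc by simp
qed

lemma conj_elem:
  assumes g: "g \<in> carrier G" and c: "c > 0" and vr: "v dvd int r ^ nat c - 1"
  shows "\<exists>X1 e. cj G g (a [^] \<alpha> \<otimes> b [^] c) = a [^] X1 \<otimes> b [^] c \<and> v dvd X1 - \<alpha> * int r ^ e"
proof -
  obtain x0 y0 where g0: "g = a [^] (x0::int) \<otimes> b [^] (y0::int)" using all_form[OF g] by blast
  obtain e where se: "sf y0 = int r ^ e" using sf_pow by blast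
  have "cj G g (a [^] \<alpha> \<otimes> b [^] c) = cj G (a [^] x0) (cj G (b [^] y0) (a [^] \<alpha> \<otimes> b [^] c))"
    by (simp add: g0 cj_comp)
  also have "\<dots> = cj G (a [^] x0) (a [^] (\<alpha> * sf y0) \<otimes> b [^] c)" by (simp add: cj_b_gen)
  also have "\<dots> = a [^] (x0 + \<alpha> * sf y0 - x0 * sf c) \<otimes> b [^] c"
    by (simp add: cj_def m_assoc)
  finally have e1: "cj G g (a [^] \<alpha> \<otimes> b [^] c) = a [^] (x0 + \<alpha> * sf y0 - x0 * sf c) \<otimes> b [^] c" .
  have s: "v dvd sf c - 1" by (rule sf_dvd[OF c vr]) simp
  have "x0 + \<alpha> * sf y0 - x0 * sf c - \<alpha> * int r ^ e = - (x0 * (sf c - 1))"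
    using se by (simp add: algebra_simps)
  moreover have "v dvd - (x0 * (sf c - 1))" using s by simp
  ultimately have "v dvd x0 + \<alpha> * sf y0 - x0 * sf c - \<alpha> * int r ^ e" by metis
  then show ?thesis using e1 by blast
qed

lemma gen_eq:
  fixes v s s' x x' c :: int
  assumes vx: "v dvd x - x'" and ns: "int n dvd v * s * s' - v"
  shows "generate G {a [^] (v*s), a [^] x \<otimes> b [^] c} = generate G {a [^] v, a [^] x' \<otimes> b [^] c}"
proof
  let ?L = "generate G {a [^] (v*s), a [^] x \<otimes> b [^] c}"
  let ?R = "generate G {a [^] v, a [^] x' \<otimes> b [^] c}"
  have sL: "subgroup ?L G" by (rule generate_is_subgroup) auto
  have sR: "subgroup ?R G" by (rule generate_is_subgroup) auto
  obtain q where q: "x - x' = v * q" using vx by blast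
  have avR: "a [^] v \<in> ?R" by (rule generate.incl) simp
  have avL: "a [^] v \<in> ?L"
  proof -
    have "a [^] (v*s) \<in> ?L" by (rule generate.incl) simp
    then have "(a [^] (v*s)) [^] s' \<in> ?L" by (rule subgroup_int_pow_closed[OF sL])
    moreover have "(a [^] (v*s)) [^] s' = a [^] v"
      using apow_mod[OF ns] by (simp add: a int_pow_pow)
    ultimately show ?thesis by simp
  qed
  show "?L \<subseteq> ?R"
  proof (rule generate_subgroup_incl[OF _ sR])
    have "(a [^] v) [^] s \<in> ?R" by (rule subgroup_int_pow_closed[OF sR avR])
    then have 1: "a [^] (v*s) \<in> ?R" by (simp add: a int_pow_pow)
    have "(a [^] v) [^] q \<otimes> (a [^] x' \<otimes> b [^] c) \<in> ?R"
      by (rule subgroup.m_closed[OF sR subgroup_int_pow_closed[OF sR avR]]) (rule generate.incl, simp)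
    moreover have "(a [^] v) [^] q \<otimes> (a [^] x' \<otimes> b [^] c) = a [^] x \<otimes> b [^] c"
    proof -
      have "x = v * q + x'" using q by simp
      then show ?thesis by (simp add: a int_pow_pow)
    qed
    ultimately have 2: "a [^] x \<otimes> b [^] c \<in> ?R" by simp
    show "{a [^] (v*s), a [^] x \<otimes> b [^] c} \<subseteq> ?R" using 1 2 by blast
  qed
  show "?R \<subseteq> ?L"
  proof (rule generate_subgroup_incl[OF _ sL])
    have "(a [^] v) [^] (-q) \<otimes> (a [^] x \<otimes> b [^] c) \<in> ?L"
      by (rule subgroup.m_closed[OF sL subgroup_int_pow_closed[OF sL avL]]) (rule generate.incl, simp)
    moreover have "(a [^] v) [^] (-q) \<otimes> (a [^] x \<otimes> b [^] c) = a [^] x' \<otimes> b [^] c"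
    proof -
      have "x' = v * (-q) + x" using q by simp
      then show ?thesis by (simp add: a int_pow_pow)
    qed
    ultimately have 2: "a [^] x' \<otimes> b [^] c \<in> ?L" by simp
    show "{a [^] v, a [^] x' \<otimes> b [^] c} \<subseteq> ?L" using avL 2 by blast
  qed
qed

end


lemma rpow_cong:
  assumes "[r ^ t = 1] (mod n)"
  shows "int n dvd int r ^ (t*e) - 1"
proof -
  have "[int (r ^ t) = int 1] (mod int n)" using assms by (simp only: cong_int_iff)
  then have "[int r ^ t = 1] (mod int n)" by simp
  then have "[(int r ^ t) ^ e = 1 ^ e] (mod int n)" by (rule cong_pow)
  then show ?thesis by (simp add: power_mult cong_iff_dvd_diff)
qed

theorem lemma3:
  fixes G :: "('g, 'm) monoid_scheme" and a b :: 'g and n t k r :: nat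
    and v i c \<alpha>1 \<beta>1 \<alpha>2 \<beta>2 :: int
  assumes "n > 0" and "t > 0"
    and "metacyclic_pres G a b n t k r"
    and "[r ^ t = 1] (mod n)"
    and "[int k * (int r - 1) = 0] (mod int n)"
    and "(v, i, c) \<in> frakN n t k r"
    and "(v, \<alpha>1, \<beta>1) \<in> X_set n t k r v i c"
    and "(v, \<alpha>2, \<beta>2) \<in> X_set n t k r v i c"
  shows "conjugate_in G (H_sub G a b v \<alpha>1 (\<beta>1 * o_ord r v)) (H_sub G a b v \<alpha>2 (\<beta>2 * o_ord r v))
     \<longleftrightarrow> \<beta>1 = \<beta>2 \<and> (\<exists>j::nat. [\<alpha>1 = \<alpha>2 * int r ^ j] (mod v))"
proof -
  let ?o = "o_ord r v"
  have "mcg G a b n t k r"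
    using assms(1,2,3) unfolding mcg_def mcg_axioms_def metacyclic_pres_def by (auto simp: int_pow_int)
  then interpret M: mcg G a b n t k r .
  have B1: "(v, \<alpha>1, \<beta>1) \<in> B_set n t k r ?o" using assms(7) by (simp add: X_set_def)
  have B2: "(v, \<alpha>2, \<beta>2) \<in> B_set n t k r ?o" using assms(8) by (simp add: X_set_def)
  have v0: "v > 0" "v dvd int n" "v dvd int r ^ nat ?o - 1" using B1 by (simp_all add: B_set_def)
  have p1: "?o * \<beta>1 > 0" "?o * \<beta>1 dvd int t" "v dvd int k + \<alpha>1 * (int t div (?o * \<beta>1))"
    using B1 by (simp_all add: B_set_def)
  have p2: "?o * \<beta>2 > 0" "?o * \<beta>2 dvd int t" "v dvd int k + \<alpha>2 * (int t div (?o * \<beta>2))"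
    using B2 by (simp_all add: B_set_def)
  have o0: "?o \<ge> 0" by (simp add: o_ord_def)
  have opos: "?o > 0" and b1pos: "\<beta>1 > 0" and b2pos: "\<beta>2 > 0"
    using p1(1) p2(1) o0 by (auto simp: zero_less_mult_iff)
  define c1 where "c1 = \<beta>1 * ?o"
  define c2 where "c2 = \<beta>2 * ?o"
  have c1pos: "c1 > 0" and c2pos: "c2 > 0" using opos b1pos b2pos by (simp_all add: c1_def c2_def)
  have c1t: "c1 dvd int t" and c2t: "c2 dvd int t" using p1(2) p2(2) by (simp_all add: c1_def c2_def mult.commute)
  have vk1: "v dvd int k + \<alpha>1 * (int t div c1)" and vk2: "v dvd int k + \<alpha>2 * (int t div c2)"
    using p1(3) p2(3) by (simp_all add: c1_def c2_def mult.commute)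
  have vr1: "v dvd int r ^ nat c1 - 1"
  proof (rule pow_dvd_mult[OF v0(3)])
    show "nat ?o dvd nat c1" using b1pos o0 by (simp add: c1_def nat_mult_distrib)
  qed
  have vr2: "v dvd int r ^ nat c2 - 1"
  proof (rule pow_dvd_mult[OF v0(3)])
    show "nat ?o dvd nat c2" using b2pos o0 by (simp add: c2_def nat_mult_distrib)
  qed
  have rc: "\<And>e. v dvd int r ^ (t*e) - 1"
    using rpow_cong[OF assms(4)] v0(2) by (meson dvd_trans)
  have rcn: "\<And>e. int n dvd int r ^ (t*e) - 1"
    using rpow_cong[OF assms(4)] by blast
  let ?H1 = "generate G {a [^]\<^bsub>G\<^esub> v, a [^]\<^bsub>G\<^esub> \<alpha>1 \<otimes>\<^bsub>G\<^esub> b [^]\<^bsub>G\<^esub> c1}"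
  let ?H2 = "generate G {a [^]\<^bsub>G\<^esub> v, a [^]\<^bsub>G\<^esub> \<alpha>2 \<otimes>\<^bsub>G\<^esub> b [^]\<^bsub>G\<^esub> c2}"
  have cjeq: "\<And>g. (\<lambda>h. g \<otimes>\<^bsub>G\<^esub> h \<otimes>\<^bsub>G\<^esub> inv\<^bsub>G\<^esub> g) = cj G g" by (simp add: cj_def fun_eq_iff)
  have conj_iff: "conjugate_in G (H_sub G a b v \<alpha>1 (\<beta>1 * ?o)) (H_sub G a b v \<alpha>2 (\<beta>2 * ?o))
      \<longleftrightarrow> (\<exists>g \<in> carrier G. ?H2 = cj G g ` ?H1)"
    unfolding conjugate_in_def H_sub_def cjeq c1_def c2_def by simp
  have H1c: "?H1 \<subseteq> carrier G" by (rule M.generate_incl) auto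
  show ?thesis unfolding conj_iff
  proof
    assume "\<exists>g \<in> carrier G. ?H2 = cj G g ` ?H1"
    then obtain g where g: "g \<in> carrier G" and H2: "?H2 = cj G g ` ?H1" by blast
    obtain Z e where ce: "cj G g (a [^]\<^bsub>G\<^esub> \<alpha>1 \<otimes>\<^bsub>G\<^esub> b [^]\<^bsub>G\<^esub> c1) = a [^]\<^bsub>G\<^esub> Z \<otimes>\<^bsub>G\<^esub> b [^]\<^bsub>G\<^esub> c1"
        and ve: "v dvd Z - \<alpha>1 * int r ^ e"
      using M.conj_elem[OF g c1pos vr1] by blast
    have "a [^]\<^bsub>G\<^esub> \<alpha>1 \<otimes>\<^bsub>G\<^esub> b [^]\<^bsub>G\<^esub> c1 \<in> ?H1" by (rule generate.incl) simp
    then have "a [^]\<^bsub>G\<^esub> Z \<otimes>\<^bsub>G\<^esub> b [^]\<^bsub>G\<^esub> c1 \<in> ?H2" using H2 ce by (metis image_eqI)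
    from M.mem[OF c2pos vr2 c2t v0(2) vk2 this]
    have d21: "c2 dvd c1" and vX: "v dvd Z - \<alpha>2 * (c1 div c2)" by auto
    have H1: "?H1 = cj G (inv\<^bsub>G\<^esub> g) ` ?H2"
    proof -
      have "cj G (inv\<^bsub>G\<^esub> g) ` ?H2 = (\<lambda>h. cj G (inv\<^bsub>G\<^esub> g) (cj G g h)) ` ?H1"
        using H2 by (simp add: image_image)
      also have "\<dots> = ?H1" using H1c g by (auto simp: M.cj_inv_cancel intro!: image_eqI)
      finally show ?thesis by simp
    qed
    have ig: "inv\<^bsub>G\<^esub> g \<in> carrier G" using g by simp
    obtain Z' where ce': "cj G (inv\<^bsub>G\<^esub> g) (a [^]\<^bsub>G\<^esub> \<alpha>2 \<otimes>\<^bsub>G\<^esub> b [^]\<^bsub>G\<^esub> c2) = a [^]\<^bsub>G\<^esub> (Z'::int) \<otimes>\<^bsub>G\<^esub> b [^]\<^bsub>G\<^esub> c2"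
      using M.conj_elem[OF ig c2pos vr2, where \<alpha>=\<alpha>2] by blast
    have "a [^]\<^bsub>G\<^esub> \<alpha>2 \<otimes>\<^bsub>G\<^esub> b [^]\<^bsub>G\<^esub> c2 \<in> ?H2" by (rule generate.incl) simp
    then have "a [^]\<^bsub>G\<^esub> Z' \<otimes>\<^bsub>G\<^esub> b [^]\<^bsub>G\<^esub> c2 \<in> ?H1" using H1 ce' by (metis image_eqI)
    from M.mem[OF c1pos vr1 c1t v0(2) vk1 this]
    have d12: "c1 dvd c2" by auto
    have ceq: "c1 = c2" using d12 d21 c1pos c2pos by (intro zdvd_antisym_nonneg) auto
    then have beq: "\<beta>1 = \<beta>2" using opos by (simp add: c1_def c2_def)
    have "c1 div c2 = 1" using ceq c2pos by simp
    then have vX2: "v dvd Z - \<alpha>2" using vX by simp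
    have "v dvd (Z - \<alpha>2) - (Z - \<alpha>1 * int r ^ e)" using vX2 ve by (rule dvd_diff)
    then have d3: "v dvd \<alpha>1 * int r ^ e - \<alpha>2" by simp
    have pe: "int r ^ e * int r ^ ((t-1)*e) = int r ^ (t*e)"
    proof -
      have "e + (t-1)*e = t*e" using assms(2) by (cases t) auto
      then show ?thesis by (metis power_add)
    qed
    have "\<alpha>1 - \<alpha>2 * int r ^ ((t-1)*e) = (\<alpha>1 * int r ^ e - \<alpha>2) * int r ^ ((t-1)*e) - \<alpha>1 * (int r ^ e * int r ^ ((t-1)*e) - 1)"
      by (simp add: algebra_simps)
    then have "\<alpha>1 - \<alpha>2 * int r ^ ((t-1)*e) = (\<alpha>1 * int r ^ e - \<alpha>2) * int r ^ ((t-1)*e) - \<alpha>1 * (int r ^ (t*e) - 1)"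
      unfolding pe .
    moreover have "v dvd (\<alpha>1 * int r ^ e - \<alpha>2) * int r ^ ((t-1)*e) - \<alpha>1 * (int r ^ (t*e) - 1)"
      using d3 rc by (simp add: dvd_diff)
    ultimately have "v dvd \<alpha>1 - \<alpha>2 * int r ^ ((t-1)*e)" by metis
    then have "[\<alpha>1 = \<alpha>2 * int r ^ ((t-1)*e)] (mod v)" by (simp add: cong_iff_dvd_diff)
    then show "\<beta>1 = \<beta>2 \<and> (\<exists>j::nat. [\<alpha>1 = \<alpha>2 * int r ^ j] (mod v))" using beq by blast
  next
    assume "\<beta>1 = \<beta>2 \<and> (\<exists>j::nat. [\<alpha>1 = \<alpha>2 * int r ^ j] (mod v))"
    then obtain j where beq: "\<beta>1 = \<beta>2" and cj1: "[\<alpha>1 = \<alpha>2 * int r ^ j] (mod v)" by blast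
    have ceq: "c2 = c1" using beq by (simp add: c1_def c2_def)
    have dj: "v dvd \<alpha>1 - \<alpha>2 * int r ^ j" using cj1 by (simp add: cong_iff_dvd_diff)
    define s where "s = int r ^ ((t-1)*j)"
    have sfj: "M.sf (int j) = s" by (simp add: M.sf_def s_def)
    have pe: "int r ^ j * s = int r ^ (t*j)"
    proof -
      have "j + (t-1)*j = t*j" using assms(2) by (cases t) auto
      then show ?thesis unfolding s_def by (metis power_add)
    qed
    define g where "g = b [^]\<^bsub>G\<^esub> (int j)"
    have g: "g \<in> carrier G" by (simp add: g_def)
    have "cj G g ` ?H1 = generate G (cj G g ` {a [^]\<^bsub>G\<^esub> v, a [^]\<^bsub>G\<^esub> \<alpha>1 \<otimes>\<^bsub>G\<^esub> b [^]\<^bsub>G\<^esub> c1})"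
      by (rule M.cj_img_generate[OF g]) auto
    also have "\<dots> = generate G {a [^]\<^bsub>G\<^esub> (v * s), a [^]\<^bsub>G\<^esub> (\<alpha>1 * s) \<otimes>\<^bsub>G\<^esub> b [^]\<^bsub>G\<^esub> c1}"
      by (simp add: g_def M.conj_b_apow M.cj_b_gen sfj)
    also have "\<dots> = ?H2"
    proof -
      have "\<alpha>1 * s - \<alpha>2 = (\<alpha>1 - \<alpha>2 * int r ^ j) * s + \<alpha>2 * (int r ^ j * s - 1)"
        by (simp add: algebra_simps)
      then have "\<alpha>1 * s - \<alpha>2 = (\<alpha>1 - \<alpha>2 * int r ^ j) * s + \<alpha>2 * (int r ^ (t*j) - 1)"
        unfolding pe .
      moreover have "v dvd (\<alpha>1 - \<alpha>2 * int r ^ j) * s + \<alpha>2 * (int r ^ (t*j) - 1)"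
        using dj rc by simp
      ultimately have vx: "v dvd \<alpha>1 * s - \<alpha>2" by metis
      have "v * s * int r ^ j - v = v * (int r ^ j * s - 1)"
        by (simp add: algebra_simps)
      then have "v * s * int r ^ j - v = v * (int r ^ (t*j) - 1)"
        unfolding pe .
      moreover have "int n dvd v * (int r ^ (t*j) - 1)" using rcn by simp
      ultimately have ns: "int n dvd v * s * int r ^ j - v" by metis
      show ?thesis using M.gen_eq[OF vx ns, of c1] ceq by simp
    qed
    finally show "\<exists>g \<in> carrier G. ?H2 = cj G g ` ?H1" using g by metis
  qed
qed

end
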